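(* Assume $d\ge1$ and let $\lambda\in\mathbb R$. Let $\bar u^*_0,\dots,\bar u^*_d$ be an ordering of $u^*_0,\dots,u^*_d$. Then the matrix representing $(L^*+\lambda)^2$ with respect to the ordered basis $\bar u^*_0,\dots,\bar u^*_d$ is irreducible tridiagonal if and only if one of the following holds: (i) $2\lambda+a^*_{d-1}+a^*_d\neq0$, $2\lambda+a^*_i+a^*_{i+1}=0$ for all $0\le i\le d-2$, and either $\bar u^*_i=u^*_{2i}$ for $0\le i\le\lfloor d/2\rfloor$ and $\bar u^*_i=u^*_{2(d-i)+1}$ for $\lfloor d/2\rfloor+1\le i\le d$; or $\bar u^*_i=u^*_{2i+1}$ for $0\le i\le\lceil d/2\rceil-1$ and $\bar u^*_i=u^*_{2(d-i)}$ for $\lceil d/2\rceil\le i\le d$. (ii) $2\lambda+a^*_0+a^*_1\neq0$, $2\lambda+a^*_i+a^*_{i+1}=0$ for all $1\le i\le d-1$, and either $\bar u^*_i=u^*_{d-2i}$ for $0\le i\le\lfloor d/2\rfloor$ and $\bar u^*_i=u^*_{2i-d-1}$ for $\lfloor d/2\rfloor+1\le i\le d$; or $\bar u^*_i=u^*_{d-2i-1}$ for $0\le i\le\lceil d/2\rceil-1$ and $\bar u^*_i=u^*_{2i-d}$ for $\lceil d/2\rceil\le i\le d$.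
   Context: Fix an integer $d\ge0$ and $r,s\in(-1,\infty)$. Write $(x)_i=x(x+1)\cdots(x+i-1)$, $(x)_0=1$. For $0\le i\le d$ put $\theta_i=(d-i)(d-i+r+s+1)$ (distinct) and $\theta^*_i=i$. Put $b^*_i=\frac{(d-i)(i-d-s)(2d-2i+r+s+2)_i}{(2d-2i+r+s)_{i+1}}$ ($0\le i\le d-1$), $c^*_i=\frac{i(i-d-r-1)(d-i+r+s+1)_{d-i}}{(d-i+r+s+2)_{d-i+1}}$ ($1\le i\le d$), $b^*_d=c^*_0=0$, $a^*_i=\theta^*_0-b^*_i-c^*_i$, $k^*_i=\frac{b^*_0\cdots b^*_{i-1}}{c^*_1\cdots c^*_i}$ ($0\le i\le d$). Put $c_i=i(i+r)$ and $\nu=\frac{\prod_{j=1}^d(\theta_0-\theta_j)}{c_1\cdots c_d}$. Let $\mathcal P_d(\mathbb R)$ be the real polynomials of degree at most $d$, each determined by its values at $\theta_0,\dots,\theta_d$. Let $L^*$ be the linear map on $\mathcal P_d(\mathbb R)$ with $(L^*f)(\theta_i)=b^*_i f(\theta_{i+1})+a^*_i f(\theta_i)+c^*_i f(\theta_{i-1})$ ($0\le i\le d$; terms with coefficient $b^*_d$ or $c^*_0$ omitted). Let $u^*_i\in\mathcal P_d(\mathbb R)$ be defined by $u^*_i(\theta_j)=0$ for $j\neq i$ and $u^*_i(\theta_i)=\nu/k^*_i$; these form a basis. A square matrix is irreducible tridiagonal if its nonzero entries lie on the diagonal, subdiagonal or superdiagonal and all subdiagonal and superdiagonal entries are nonzero.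 *)

theory Defs
  imports "HOL-Computational_Algebra.Polynomial"
begin

definition th :: "nat \<Rightarrow> real \<Rightarrow> real \<Rightarrow> nat \<Rightarrow> real" where
  "th d r s i = (real d - real i) * (real d - real i + r + s + 1)"

definition thstar :: "nat \<Rightarrow> real" where
  "thstar i = real i"

definition bstar :: "nat \<Rightarrow> real \<Rightarrow> real \<Rightarrow> nat \<Rightarrow> real" where
  "bstar d r s i = (if i < d then
     (real d - real i) * (real i - real d - s)
       * pochhammer (2 * real d - 2 * real i + r + s + 2) i
       / pochhammer (2 * real d - 2 * real i + r + s) (i + 1)
   else 0)"

definition cstar :: "nat \<Rightarrow> real \<Rightarrow> real \<Rightarrow> nat \<Rightarrow> real" where
  "cstar d r s i = (if 1 \<le> i \<and> i \<le> d then
     real i * (real i - real d - r - 1)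
       * pochhammer (real d - real i + r + s + 1) (d - i)
       / pochhammer (real d - real i + r + s + 2) (d - i + 1)
   else 0)"

definition astar :: "nat \<Rightarrow> real \<Rightarrow> real \<Rightarrow> nat \<Rightarrow> real" where
  "astar d r s i = thstar 0 - bstar d r s i - cstar d r s i"

definition kstar :: "nat \<Rightarrow> real \<Rightarrow> real \<Rightarrow> nat \<Rightarrow> real" where
  "kstar d r s i = (\<Prod>j<i. bstar d r s j) / (\<Prod>j\<in>{1..i}. cstar d r s j)"

definition cc :: "real \<Rightarrow> nat \<Rightarrow> real" where
  "cc r i = real i * (real i + r)"

definition nu :: "nat \<Rightarrow> real \<Rightarrow> real \<Rightarrow> real" where
  "nu d r s = (\<Prod>j\<in>{1..d}. th d r s 0 - th d r s j) / (\<Prod>j\<in>{1..d}. cc r j)"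

definition lag :: "nat \<Rightarrow> real \<Rightarrow> real \<Rightarrow> nat \<Rightarrow> real poly" where
  "lag d r s i = smult (1 / (\<Prod>j\<in>{0..d} - {i}. th d r s i - th d r s j))
      (\<Prod>j\<in>{0..d} - {i}. [:- th d r s j, 1:])"

definition interp :: "nat \<Rightarrow> real \<Rightarrow> real \<Rightarrow> (nat \<Rightarrow> real) \<Rightarrow> real poly" where
  "interp d r s v = (\<Sum>i\<in>{0..d}. smult (v i) (lag d r s i))"

definition Lstar :: "nat \<Rightarrow> real \<Rightarrow> real \<Rightarrow> real poly \<Rightarrow> real poly" where
  "Lstar d r s f = interp d r s (\<lambda>i.
      (if i < d then bstar d r s i * poly f (th d r s (i + 1)) else 0)
      + astar d r s i * poly f (th d r s i)
      + (if 0 < i then cstar d r s i * poly f (th d r s (i - 1)) else 0))"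

definition ustar :: "nat \<Rightarrow> real \<Rightarrow> real \<Rightarrow> nat \<Rightarrow> real poly" where
  "ustar d r s i = smult (nu d r s / kstar d r s i) (lag d r s i)"

definition rep_matrix :: "nat \<Rightarrow> (real poly \<Rightarrow> real poly) \<Rightarrow> (nat \<Rightarrow> real poly) \<Rightarrow> nat \<Rightarrow> nat \<Rightarrow> real" where
  "rep_matrix d T b = (THE M. (\<forall>i j. (d < i \<or> d < j) \<longrightarrow> M i j = 0) \<and>
      (\<forall>j\<le>d. T (b j) = (\<Sum>i\<in>{0..d}. smult (M i j) (b i))))"

definition irred_tridiag :: "nat \<Rightarrow> (nat \<Rightarrow> nat \<Rightarrow> real) \<Rightarrow> bool" where
  "irred_tridiag d M \<longleftrightarrow>
     (\<forall>i\<le>d. \<forall>j\<le>d. (i + 1 < j \<or> j + 1 < i) \<longrightarrow> M i j = 0) \<and>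
     (\<forall>i<d. M (i + 1) i \<noteq> 0 \<and> M i (i + 1) \<noteq> 0)"

definition Lsq :: "nat \<Rightarrow> real \<Rightarrow> real \<Rightarrow> real \<Rightarrow> real poly \<Rightarrow> real poly" where
  "Lsq d r s lam f = (let g = Lstar d r s f + smult lam f in Lstar d r s g + smult lam g)"

end

theory Submission
  imports Defs
begin


lemma th_inj:
  assumes "r > -1" "s > -1" "i \<le> d" "j \<le> d" "th d r s i = th d r s j"
  shows "i = j"
proof (rule ccontr)
  assume ne: "i \<noteq> j"
  define x where "x = real d - real i"
  define y where "y = real d - real j"
  have x0: "x \<ge> 0" "y \<ge> 0" using assms by (auto simp: x_def y_def)
  have xy: "x \<noteq> y" using ne by (auto simp: x_def y_def)
  have "x + y \<ge> 1"
  proof -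
    have "x = real (d - i)" "y = real (d - j)" using assms by (auto simp: x_def y_def of_nat_diff)
    moreover have "d - i + (d - j) \<ge> 1" using ne assms by auto
    ultimately show ?thesis by (metis of_nat_add of_nat_le_iff of_nat_1)
  qed
  hence pos: "x + y + r + s + 1 > 0" using assms by linarith
  have "x * (x + r + s + 1) = y * (y + r + s + 1)" using assms(5) by (simp add: th_def x_def y_def)
  hence "(x - y) * (x + y + r + s + 1) = 0" by (simp add: algebra_simps)
  with pos xy show False by simp
qed

lemma bstar_nz:
  assumes "r > -1" "s > -1" "i < d"
  shows "bstar d r s i \<noteq> 0"
proof -
  have "real d - real i \<ge> 1" using assms by (simp add: of_nat_diff[symmetric] del: of_nat_diff)
  hence p1: "pochhammer (2 * real d - 2 * real i + r + s + 2) i > 0"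
     and p2: "pochhammer (2 * real d - 2 * real i + r + s) (i+1) > 0"
    using assms by (auto intro!: pochhammer_pos)
  have "real i - real d - s < 0" using assms by auto
  moreover have "real d - real i \<noteq> 0" using assms by auto
  ultimately show ?thesis using assms p1 p2 by (simp add: bstar_def)
qed

lemma cstar_nz:
  assumes "r > -1" "s > -1" "1 \<le> i" "i \<le> d"
  shows "cstar d r s i \<noteq> 0"
proof -
  have p1: "pochhammer (real d - real i + r + s + 1) (d - i) \<noteq> 0"
  proof (cases "i = d")
    case True thus ?thesis by simp
  next
    case False
    hence "real d - real i \<ge> 1" using assms by (simp add: of_nat_diff[symmetric] del: of_nat_diff)
    hence "pochhammer (real d - real i + r + s + 1) (d - i) > 0" using assms by (auto intro!: pochhammer_pos)
    thus ?thesis by simp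
  qed
  have "real d - real i \<ge> 0" using assms by simp
  hence p2: "pochhammer (real d - real i + r + s + 2) (d - i + 1) > 0" using assms by (auto intro!: pochhammer_pos)
  have "real i - real d - r - 1 < 0" using assms by auto
  moreover have "real i \<noteq> 0" using assms by auto
  ultimately show ?thesis using assms p1 p2 by (simp add: cstar_def)
qed

lemma kstar_nz:
  assumes "r > -1" "s > -1" "i \<le> d"
  shows "kstar d r s i \<noteq> 0"
  using assms bstar_nz cstar_nz unfolding kstar_def by (auto simp: prod_zero_iff)

lemma nu_nz:
  assumes "r > -1" "s > -1"
  shows "nu d r s \<noteq> 0"
proof -
  have "th d r s 0 - th d r s j \<noteq> 0" if "j \<in> {1..d}" for j
    using th_inj[OF assms, of 0 d j] that by auto
  hence "(\<Prod>j\<in>{1..d}. th d r s 0 - th d r s j) \<noteq> 0"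
    by (simp add: prod_zero_iff)
  moreover have "(\<Prod>j\<in>{1..d}. cc r j) \<noteq> 0"
    using assms by (auto simp: prod_zero_iff cc_def) 
  ultimately show ?thesis by (simp add: nu_def)
qed

lemma poly_lag:
  assumes "r > -1" "s > -1" "i \<le> d" "j \<le> d"
  shows "poly (lag d r s i) (th d r s j) = (if i = j then 1 else 0)"
proof (cases "i = j")
  case True
  have "(\<Prod>k\<in>{0..d} - {i}. th d r s i - th d r s k) \<noteq> 0"
    using th_inj[OF assms(1,2)] assms by (auto simp: prod_zero_iff)
  then show ?thesis using True by (simp add: lag_def poly_prod)
next
  case False
  have "(\<Prod>k\<in>{0..d} - {i}. th d r s j - th d r s k) = 0"
    using False assms by (auto simp: prod_zero_iff intro!: bexI[of _ j])
  then show ?thesis using False by (simp add: lag_def poly_prod)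
qed

lemma degree_lag: assumes that: "i \<le> d" shows "degree (lag d r s i) \<le> d"
proof -
  have "degree (\<Prod>j\<in>{0..d} - {i}. [:- th d r s j, 1:]) \<le> (\<Sum>j\<in>{0..d} - {i}. 1)"
    using degree_prod_sum_le[of "{0..d} - {i}" "\<lambda>j. [:- th d r s j, 1:]"] by (simp add: o_def)
  also have "\<dots> \<le> d" using that by simp
  finally show ?thesis unfolding lag_def by (meson degree_smult_le le_trans)
qed

lemma poly_interp:
  assumes "r > -1" "s > -1" "j \<le> d"
  shows "poly (interp d r s v) (th d r s j) = v j"
  using assms by (simp add: interp_def poly_sum poly_lag if_distrib cong: if_cong)

lemma degree_interp: "degree (interp d r s v) \<le> d"
  unfolding interp_def
  by (rule degree_sum_le) (auto intro: le_trans[OF degree_smult_le] degree_lag)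

lemma interp_poly:
  assumes "r > -1" "s > -1" "degree p \<le> d"
  shows "interp d r s (\<lambda>i. poly p (th d r s i)) = p"
proof (rule poly_eqI_degree[where A = "th d r s ` {0..d}"])
  have "card (th d r s ` {0..d}) = d + 1"
    by (subst card_image) (auto intro!: inj_onI dest: th_inj[OF assms(1,2)])
  thus "degree (interp d r s (\<lambda>i. poly p (th d r s i))) < card (th d r s ` {0..d})"
    "degree p < card (th d r s ` {0..d})" using degree_interp[of d r s] assms by (auto simp: less_Suc_eq_le)
qed (auto simp: poly_interp assms)



definition Tm :: "nat \<Rightarrow> real \<Rightarrow> real \<Rightarrow> real \<Rightarrow> (nat \<Rightarrow> real) \<Rightarrow> nat \<Rightarrow> real" where
  "Tm d r s lam v i = (if i < d then bstar d r s i * v (i + 1) else 0)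
      + (astar d r s i + lam) * v i + (if 0 < i then cstar d r s i * v (i - 1) else 0)"

definition Eg :: "(nat \<Rightarrow> bool) \<Rightarrow> nat \<Rightarrow> nat \<Rightarrow> bool" where
  "Eg Dn m k \<longleftrightarrow> m + 2 = k \<or> k + 2 = m \<or> (m + 1 = k \<and> Dn m) \<or> (k + 1 = m \<and> Dn k)"

lemma Tm_cong: "i \<le> d \<Longrightarrow> (\<And>j. j \<le> d \<Longrightarrow> v j = v' j) \<Longrightarrow> Tm d r s lam v i = Tm d r s lam v' i"
  unfolding Tm_def by auto

lemma poly_Lstar_lam:
  assumes "r > -1" "s > -1" "i \<le> d"
  shows "poly (Lstar d r s f + smult lam f) (th d r s i) = Tm d r s lam (\<lambda>j. poly f (th d r s j)) i"
  using assms by (simp add: Lstar_def poly_interp Tm_def algebra_simps)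

lemma poly_Lsq:
  assumes "r > -1" "s > -1" "m \<le> d"
  shows "poly (Lsq d r s lam f) (th d r s m) = Tm d r s lam (Tm d r s lam (\<lambda>j. poly f (th d r s j))) m"
proof -
  define g where "g = Lstar d r s f + smult lam f"
  have "poly (Lsq d r s lam f) (th d r s m) = Tm d r s lam (\<lambda>j. poly g (th d r s j)) m"
    unfolding Lsq_def Let_def g_def[symmetric] using poly_Lstar_lam[OF assms] .
  also have "\<dots> = Tm d r s lam (Tm d r s lam (\<lambda>j. poly f (th d r s j))) m"
    by (rule Tm_cong[OF assms(3)]) (use poly_Lstar_lam[OF assms(1,2)] in \<open>unfold g_def, blast\<close>)
  finally show ?thesis .
qed

lemma degree_Lstar: "degree (Lstar d r s f) \<le> d"
  unfolding Lstar_def by (rule degree_interp)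

lemma degree_Lsq:
  assumes "degree f \<le> d" shows "degree (Lsq d r s lam f) \<le> d"
proof -
  have g: "degree (Lstar d r s f + smult lam f) \<le> d"
    using assms degree_Lstar[of d r s f] degree_smult_le[of lam f]
    by (meson degree_add_le le_trans)
  show ?thesis unfolding Lsq_def Let_def
    using g degree_Lstar degree_smult_le by (meson degree_add_le le_trans)
qed

definition wt :: "nat \<Rightarrow> real \<Rightarrow> real \<Rightarrow> nat \<Rightarrow> real" where
  "wt d r s k = nu d r s / kstar d r s k"

lemma wt_nz: "r > -1 \<Longrightarrow> s > -1 \<Longrightarrow> k \<le> d \<Longrightarrow> wt d r s k \<noteq> 0"
  by (simp add: wt_def nu_nz kstar_nz)

lemma poly_ustar:
  assumes "r > -1" "s > -1" "k \<le> d" "j \<le> d"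
  shows "poly (ustar d r s k) (th d r s j) = wt d r s k * (if j = k then 1 else 0)"
  using assms by (simp add: ustar_def wt_def poly_lag)

lemma degree_ustar: "k \<le> d \<Longrightarrow> degree (ustar d r s k) \<le> d"
  unfolding ustar_def by (meson degree_lag degree_smult_le le_trans)

lemma ustar_inj:
  assumes "r > -1" "s > -1" "k \<le> d" "l \<le> d" "ustar d r s k = ustar d r s l"
  shows "k = l"
proof -
  have "poly (ustar d r s k) (th d r s k) = poly (ustar d r s l) (th d r s k)" using assms by simp
  hence "wt d r s k = wt d r s l * (if k = l then 1 else 0)"
    using poly_ustar[OF assms(1,2,3,3)] poly_ustar[OF assms(1,2,4,3)] by simp
  thus ?thesis using wt_nz[OF assms(1,2,3)] by (auto split: if_splits)
qed

lemma Tm_scale: "Tm d r s lam (\<lambda>j. c * v j) i = c * Tm d r s lam v i"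
  unfolding Tm_def by (simp add: algebra_simps)

lemma Tm_delta:
  "Tm d r s lam (\<lambda>j. if j = k then 1 else 0) j =
     (if j + 1 = k \<and> j < d then bstar d r s j else 0) + (if j = k then astar d r s j + lam else 0)
     + (if j = k + 1 then cstar d r s j else 0)"
  unfolding Tm_def by auto

lemma Tm_at: "Tm d r s lam v m = (if m < d then bstar d r s m * v (m + 1) else 0)
      + (astar d r s m + lam) * v m + (if 0 < m then cstar d r s m * v (m - 1) else 0)"
  by (simp add: Tm_def)

lemma Tm2_offdiag:
  assumes "r > -1" "s > -1" "m \<le> d" "k \<le> d" "m \<noteq> k"
  shows "Tm d r s lam (Tm d r s lam (\<lambda>j. if j = k then 1 else 0)) m \<noteq> 0 \<longleftrightarrow>
     Eg (\<lambda>i. 2 * lam + astar d r s i + astar d r s (i + 1) \<noteq> 0) m k"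
proof -
  note TT = Tm_at[of d r s lam "Tm d r s lam (\<lambda>j. if j = k then 1 else 0)" m] Tm_delta
  consider "m + 2 = k" | "k + 2 = m" | "m + 1 = k" | "k + 1 = m" | "m + 2 < k \<or> k + 2 < m"
    using assms by linarith
  then show ?thesis
  proof cases
    case 1
    have b1: "bstar d r s m \<noteq> 0" using 1 assms by (intro bstar_nz) auto
    have b2: "bstar d r s (m + 1) \<noteq> 0" using 1 assms by (intro bstar_nz) auto
    have "Tm d r s lam (Tm d r s lam (\<lambda>j. if j = k then 1 else 0)) m = bstar d r s m * bstar d r s (m + 1)"
      unfolding TT using 1 assms by auto
    then show ?thesis using 1 b1 b2 by (auto simp: Eg_def)
  next
    case 2
    have c1: "cstar d r s (m - 1) \<noteq> 0" using 2 assms by (intro cstar_nz) auto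
    have c2: "cstar d r s m \<noteq> 0" using 2 assms by (intro cstar_nz) auto
    have "Tm d r s lam (Tm d r s lam (\<lambda>j. if j = k then 1 else 0)) m = cstar d r s m * cstar d r s (m - 1)"
      unfolding TT using 2 assms by auto
    then show ?thesis using 2 c1 c2 by (auto simp: Eg_def)
  next
    case 3
    have b: "bstar d r s m \<noteq> 0" using 3 assms by (intro bstar_nz) auto
    have "Tm d r s lam (Tm d r s lam (\<lambda>j. if j = k then 1 else 0)) m
        = bstar d r s m * (2 * lam + astar d r s m + astar d r s (m + 1))"
      unfolding TT using 3 assms by (auto simp: algebra_simps)
    then show ?thesis using b 3 by (auto simp: Eg_def)
  next
    case 4
    have c: "cstar d r s m \<noteq> 0" using 4 assms by (intro cstar_nz) auto
    have "Tm d r s lam (Tm d r s lam (\<lambda>j. if j = k then 1 else 0)) m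
        = cstar d r s m * (2 * lam + astar d r s k + astar d r s (k + 1))"
      unfolding TT using 4 assms by (auto simp: algebra_simps)
    then show ?thesis using c 4 by (auto simp: Eg_def)
  next
    case 5
    have "Tm d r s lam (Tm d r s lam (\<lambda>j. if j = k then 1 else 0)) m = 0"
      unfolding TT using 5 by auto
    then show ?thesis using 5 by (auto simp: Eg_def)
  qed
qed



lemma Tm_scale_fun: "Tm d r s lam (\<lambda>j. c * v j) = (\<lambda>i. c * Tm d r s lam v i)"
  by (rule ext) (simp add: Tm_scale)

lemma ustar_smult: "ustar d r s k = smult (wt d r s k) (lag d r s k)"
  by (simp add: ustar_def wt_def)

lemma rep_matrix_eq:
  assumes r: "r > -1" and s: "s > -1" and bij: "bij_betw \<sigma> {0..d} {0..d}"
    and ub: "\<forall>i\<le>d. ub i = ustar d r s (\<sigma> i)"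
  shows "rep_matrix d (Lsq d r s lam) ub = (\<lambda>i j. if i \<le> d \<and> j \<le> d then
      poly (Lsq d r s lam (ub j)) (th d r s (\<sigma> i)) / wt d r s (\<sigma> i) else 0)"
    (is "_ = ?M")
proof -
  have sig: "\<sigma> i \<le> d" if "i \<le> d" for i using bij that by (auto simp: bij_betw_def)
  have inj: "\<sigma> i = \<sigma> i' \<longleftrightarrow> i = i'" if "i \<le> d" "i' \<le> d" for i i'
    using bij that by (auto simp: bij_betw_def inj_on_def)
  have wnz: "wt d r s (\<sigma> i) \<noteq> 0" if "i \<le> d" for i using wt_nz[OF r s sig[OF that]] .
  have degp: "degree (Lsq d r s lam (ub j)) \<le> d" if "j \<le> d" for j
    using ub that sig degree_ustar by (auto intro!: degree_Lsq)
  have poly_ub: "poly (ub i') (th d r s (\<sigma> i)) = wt d r s (\<sigma> i') * (if i' = i then 1 else 0)"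
    if "i \<le> d" "i' \<le> d" for i i'
    using ub that poly_ustar[OF r s sig[OF that(2)] sig[OF that(1)]] inj[OF that] by auto
  show ?thesis unfolding rep_matrix_def
  proof (rule the_equality)
    show "(\<forall>i j. (d < i \<or> d < j) \<longrightarrow> ?M i j = 0) \<and>
      (\<forall>j\<le>d. Lsq d r s lam (ub j) = (\<Sum>i\<in>{0..d}. smult (?M i j) (ub i)))"
    proof (intro conjI allI impI)
      fix i j :: nat assume "d < i \<or> d < j" thus "?M i j = 0" by auto
    next
      fix j assume j: "j \<le> d"
      define p where "p = Lsq d r s lam (ub j)"
      have "(\<Sum>i\<in>{0..d}. smult (?M i j) (ub i)) = (\<Sum>i\<in>{0..d}. smult (poly p (th d r s (\<sigma> i))) (lag d r s (\<sigma> i)))"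
        by (rule sum.cong) (use j ub wnz in \<open>auto simp: ustar_smult p_def\<close>)
      also have "\<dots> = (\<Sum>k\<in>{0..d}. smult (poly p (th d r s k)) (lag d r s k))"
        by (rule sum.reindex_bij_betw[OF bij])
      also have "\<dots> = p" using interp_poly[OF r s degp[OF j]] by (simp add: interp_def p_def)
      finally show "Lsq d r s lam (ub j) = (\<Sum>i\<in>{0..d}. smult (?M i j) (ub i))" by (simp add: p_def)
    qed
  next
    fix M assume M: "(\<forall>i j. (d < i \<or> d < j) \<longrightarrow> M i j = 0) \<and>
      (\<forall>j\<le>d. Lsq d r s lam (ub j) = (\<Sum>i\<in>{0..d}. smult (M i j) (ub i)))"
    show "M = ?M"
    proof (intro ext)
      fix i j
      show "M i j = ?M i j"
      proof (cases "i \<le> d \<and> j \<le> d")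
        case False thus ?thesis using M by auto
      next
        case True
        hence "poly (Lsq d r s lam (ub j)) (th d r s (\<sigma> i)) = poly (\<Sum>i'\<in>{0..d}. smult (M i' j) (ub i')) (th d r s (\<sigma> i))"
          using M by metis
        also have "\<dots> = (\<Sum>i'\<in>{0..d}. M i' j * (wt d r s (\<sigma> i') * (if i' = i then 1 else 0)))"
          by (simp add: poly_sum) (rule sum.cong, use True poly_ub in auto)
        also have "\<dots> = M i j * wt d r s (\<sigma> i)"
          using True by (simp add: if_distrib cong: if_cong)
        finally show ?thesis using True wnz[of i] by (simp add: field_simps)
      qed
    qed
  qed
qed

lemma irred_iff:
  fixes lam :: real
  assumes r: "r > -1" and s: "s > -1" and bij: "bij_betw \<sigma> {0..d} {0..d}"
    and ub: "\<forall>i\<le>d. ub i = ustar d r s (\<sigma> i)"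
  defines "Dn \<equiv> (\<lambda>i. 2 * lam + astar d r s i + astar d r s (i + 1) \<noteq> 0)"
  shows "irred_tridiag d (rep_matrix d (Lsq d r s lam) ub) \<longleftrightarrow>
    (\<forall>i\<le>d. \<forall>j\<le>d. (i + 1 < j \<or> j + 1 < i) \<longrightarrow> \<not> Eg Dn (\<sigma> i) (\<sigma> j)) \<and>
    (\<forall>i<d. Eg Dn (\<sigma> (i + 1)) (\<sigma> i) \<and> Eg Dn (\<sigma> i) (\<sigma> (i + 1)))"
proof -
  have sig: "\<sigma> i \<le> d" if "i \<le> d" for i using bij that by (auto simp: bij_betw_def)
  have inj: "\<sigma> i = \<sigma> i' \<longleftrightarrow> i = i'" if "i \<le> d" "i' \<le> d" for i i'
    using bij that by (auto simp: bij_betw_def inj_on_def)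
  have wnz: "wt d r s (\<sigma> i) \<noteq> 0" if "i \<le> d" for i using wt_nz[OF r s sig[OF that]] .
  define M where "M = rep_matrix d (Lsq d r s lam) ub"
  have Mnz: "M i j \<noteq> 0 \<longleftrightarrow> Eg Dn (\<sigma> i) (\<sigma> j)" if ij: "i \<le> d" "j \<le> d" "i \<noteq> j" for i j
  proof -
    have "poly (Lsq d r s lam (ub j)) (th d r s (\<sigma> i))
        = Tm d r s lam (Tm d r s lam (\<lambda>k. poly (ub j) (th d r s k))) (\<sigma> i)"
      by (rule poly_Lsq[OF r s sig[OF ij(1)]])
    also have "\<dots> = Tm d r s lam (Tm d r s lam (\<lambda>k. wt d r s (\<sigma> j) * (if k = \<sigma> j then 1 else 0))) (\<sigma> i)"
      apply (rule Tm_cong[OF sig[OF ij(1)]])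
      apply (rule Tm_cong, assumption)
      using ub ij poly_ustar[OF r s sig[OF ij(2)]] by auto
    also have "\<dots> = wt d r s (\<sigma> j) * Tm d r s lam (Tm d r s lam (\<lambda>k. if k = \<sigma> j then 1 else 0)) (\<sigma> i)"
      by (simp add: Tm_scale_fun)
    finally have e: "poly (Lsq d r s lam (ub j)) (th d r s (\<sigma> i)) = \<dots>" .
    have "M i j = wt d r s (\<sigma> j) * Tm d r s lam (Tm d r s lam (\<lambda>k. if k = \<sigma> j then 1 else 0)) (\<sigma> i) / wt d r s (\<sigma> i)"
      unfolding M_def rep_matrix_eq[OF r s bij ub] using ij e by simp
    thus ?thesis using wnz ij Tm2_offdiag[OF r s sig[OF ij(1)] sig[OF ij(2)], of lam] inj[OF ij(1,2)]
      unfolding Dn_def by auto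
  qed
  show ?thesis unfolding M_def[symmetric] irred_tridiag_def
  proof (intro iffI conjI allI impI; (elim conjE)?)
    fix i j assume a: "\<forall>i\<le>d. \<forall>j\<le>d. i + 1 < j \<or> j + 1 < i \<longrightarrow> M i j = 0"
      "i \<le> d" "j \<le> d" "i + 1 < j \<or> j + 1 < i"
    thus "\<not> Eg Dn (\<sigma> i) (\<sigma> j)" using Mnz[of i j] by auto
  next
    fix i assume "\<forall>i<d. M (i + 1) i \<noteq> 0 \<and> M i (i + 1) \<noteq> 0" "i < d"
    thus "Eg Dn (\<sigma> (i + 1)) (\<sigma> i)" "Eg Dn (\<sigma> i) (\<sigma> (i + 1))"
      using Mnz[of "i+1" i] Mnz[of i "i+1"] by auto
  next
    fix i j assume a: "\<forall>i\<le>d. \<forall>j\<le>d. i + 1 < j \<or> j + 1 < i \<longrightarrow> \<not> Eg Dn (\<sigma> i) (\<sigma> j)"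
      "i \<le> d" "j \<le> d" "i + 1 < j \<or> j + 1 < i"
    thus "M i j = 0" using Mnz[of i j] by auto
  next
    fix i assume "\<forall>i<d. Eg Dn (\<sigma> (i + 1)) (\<sigma> i) \<and> Eg Dn (\<sigma> i) (\<sigma> (i + 1))" "i < d"
    thus "M (i + 1) i \<noteq> 0" "M i (i + 1) \<noteq> 0"
      using Mnz[of "i+1" i] Mnz[of i "i+1"] by auto
  qed
qed



definition pi1 :: "nat \<Rightarrow> nat \<Rightarrow> nat" where
  "pi1 d i = (if i \<le> d div 2 then 2 * i else 2 * (d - i) + 1)"

definition p1inv :: "nat \<Rightarrow> nat \<Rightarrow> nat" where
  "p1inv d m = (if m mod 2 = 0 then m div 2 else d - m div 2)"

lemma dm2: fixes d :: nat obtains h where "d = 2 * h \<and> d div 2 = h \<and> d mod 2 = 0 \<or> d = 2 * h + 1 \<and> d div 2 = h \<and> d mod 2 = 1"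
  by (rule that[of "d div 2"]) presburger

lemma pi1_le: "i \<le> d \<Longrightarrow> pi1 d i \<le> d"
  unfolding pi1_def by (rule dm2[of d]) auto

lemma p1inv_pi1: "i \<le> d \<Longrightarrow> p1inv d (pi1 d i) = i"
  unfolding pi1_def p1inv_def by (rule dm2[of d]) auto

lemma p1inv_le: "m \<le> d \<Longrightarrow> p1inv d m \<le> d"
  unfolding p1inv_def by (rule dm2[of m]) auto

lemma pi1_p1inv: "m \<le> d \<Longrightarrow> pi1 d (p1inv d m) = m"
  unfolding pi1_def p1inv_def by (rule dm2[of m], rule dm2[of d]) auto

lemma Q1_adj2:
  assumes "k \<le> d" "k = m + 2"
  shows "p1inv d m + 1 = p1inv d k \<or> p1inv d k + 1 = p1inv d m"
proof (rule dm2[of m])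
  fix h assume "m = 2 * h \<and> m div 2 = h \<and> m mod 2 = 0 \<or> m = 2 * h + 1 \<and> m div 2 = h \<and> m mod 2 = 1"
  then consider "m = 2 * h" "k = 2 * (h + 1)" | "m = 2 * h + 1" "k = 2 * (h + 1) + 1" using assms by auto
  then show ?thesis
  proof cases
    case 1 thus ?thesis unfolding p1inv_def by simp
  next
    case 2 thus ?thesis unfolding p1inv_def using assms by (simp; presburger)
  qed
qed

lemma Q1_adj1:
  assumes "k = d" "k = m + 1"
  shows "p1inv d m + 1 = p1inv d k \<or> p1inv d k + 1 = p1inv d m"
proof (rule dm2[of m])
  fix h assume "m = 2 * h \<and> m div 2 = h \<and> m mod 2 = 0 \<or> m = 2 * h + 1 \<and> m div 2 = h \<and> m mod 2 = 1"
  then consider "m = 2 * h" "k = 2 * h + 1" | "m = 2 * h + 1" "k = 2 * (h + 1)" using assms by auto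
  then show ?thesis
  proof cases
    case 1 thus ?thesis unfolding p1inv_def using assms by (simp; presburger)
  next
    case 2 thus ?thesis unfolding p1inv_def using assms by (simp; presburger)
  qed
qed

lemma Q1_adj:
  assumes "m \<le> d" "k \<le> d" "Eg (\<lambda>i. i + 1 = d) m k"
  shows "p1inv d m + 1 = p1inv d k \<or> p1inv d k + 1 = p1inv d m"
  using assms Q1_adj1[of k d m] Q1_adj1[of m d k] Q1_adj2[of k d m] Q1_adj2[of m d k]
  unfolding Eg_def by auto

lemma pi1_adj:
  assumes "i < d"
  shows "Eg (\<lambda>i. i + 1 = d) (pi1 d i) (pi1 d (i + 1))"
  apply (rule dm2[of d])
  using assms unfolding Eg_def pi1_def by auto

lemma Eg_sym: "Eg Dn m k \<longleftrightarrow> Eg Dn k m"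
  unfolding Eg_def by auto

lemma Eg_irr: "\<not> Eg Dn m m"
  unfolding Eg_def by auto

definition PATH :: "nat \<Rightarrow> (nat \<Rightarrow> bool) \<Rightarrow> (nat \<Rightarrow> nat) \<Rightarrow> bool" where
  "PATH d Dn \<sigma> \<longleftrightarrow> (\<forall>i\<le>d. \<forall>j\<le>d. (i + 1 < j \<or> j + 1 < i) \<longrightarrow> \<not> Eg Dn (\<sigma> i) (\<sigma> j)) \<and>
     (\<forall>i<d. Eg Dn (\<sigma> (i + 1)) (\<sigma> i) \<and> Eg Dn (\<sigma> i) (\<sigma> (i + 1)))"

lemma PATH_cong:
  assumes "\<And>m k. m \<le> d \<Longrightarrow> k \<le> d \<Longrightarrow> Eg D1 m k \<longleftrightarrow> Eg D2 (f m) (f k)"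
    and "\<And>i. i \<le> d \<Longrightarrow> \<sigma> i \<le> d"
  shows "PATH d D1 \<sigma> \<longleftrightarrow> PATH d D2 (\<lambda>i. f (\<sigma> i))"
proof -
  have eq: "Eg D1 (\<sigma> i) (\<sigma> j) = Eg D2 (f (\<sigma> i)) (f (\<sigma> j))" if "i \<le> d" "j \<le> d" for i j
    using assms that by blast
  have A: "(\<forall>i\<le>d. \<forall>j\<le>d. (i + 1 < j \<or> j + 1 < i) \<longrightarrow> \<not> Eg D1 (\<sigma> i) (\<sigma> j)) =
     (\<forall>i\<le>d. \<forall>j\<le>d. (i + 1 < j \<or> j + 1 < i) \<longrightarrow> \<not> Eg D2 (f (\<sigma> i)) (f (\<sigma> j)))"
    using eq by blast
  have B: "(\<forall>i<d. Eg D1 (\<sigma> (i + 1)) (\<sigma> i) \<and> Eg D1 (\<sigma> i) (\<sigma> (i + 1))) =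
     (\<forall>i<d. Eg D2 (f (\<sigma> (i + 1))) (f (\<sigma> i)) \<and> Eg D2 (f (\<sigma> i)) (f (\<sigma> (i + 1))))"
  proof -
    have "Eg D1 (\<sigma> (i + 1)) (\<sigma> i) = Eg D2 (f (\<sigma> (i + 1))) (f (\<sigma> i))"
         "Eg D1 (\<sigma> i) (\<sigma> (i + 1)) = Eg D2 (f (\<sigma> i)) (f (\<sigma> (i + 1)))" if "i < d" for i
      using eq[of "i+1" i] eq[of i "i+1"] that by auto
    thus ?thesis by blast
  qed
  show ?thesis unfolding PATH_def using A B by simp
qed

lemma path_mono:
  fixes \<rho> :: "nat \<Rightarrow> nat"
  assumes step: "\<forall>i<d. \<rho> (i + 1) = \<rho> i + 1 \<or> \<rho> i = \<rho> (i + 1) + 1"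
    and inj: "inj_on \<rho> {0..d}" and bnd: "\<forall>i\<le>d. \<rho> i \<le> d"
  shows "(\<forall>i\<le>d. \<rho> i = i) \<or> (\<forall>i\<le>d. \<rho> i = d - i)"
proof (cases "d = 0")
  case True thus ?thesis using bnd by auto
next
  case False
  have noback: False if "i + 2 \<le> d" "\<rho> (i + 2) = \<rho> i" for i
  proof -
    have "i \<in> {0..d}" "i + 2 \<in> {0..d}" using that by auto
    hence "i = i + 2" using inj that(2) unfolding inj_on_def by metis
    thus False by simp
  qed
  have st: "\<rho> (i + 1) = \<rho> i + 1 \<or> \<rho> i = \<rho> (i + 1) + 1" if "i < d" for i
    using step that by blast
  have "\<rho> (0 + 1) = \<rho> 0 + 1 \<or> \<rho> 0 = \<rho> (0 + 1) + 1" using st False by blast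
  hence "\<rho> 1 = \<rho> 0 + 1 \<or> \<rho> 0 = \<rho> 1 + 1" by simp
  then show ?thesis
  proof
    assume 1: "\<rho> 1 = \<rho> 0 + 1"
    have up: "\<rho> (i + 1) = \<rho> i + 1" if "i < d" for i
      using that
    proof (induction i)
      case 0 thus ?case using 1 by simp
    next
      case (Suc i)
      have ih: "\<rho> (i + 1) = \<rho> i + 1" using Suc.IH Suc.prems by simp
      have s2: "\<rho> (Suc i + 1) = \<rho> (Suc i) + 1 \<or> \<rho> (Suc i) = \<rho> (Suc i + 1) + 1"
        using st Suc.prems by blast
      show ?case
      proof (rule ccontr)
        assume "\<not> ?case"
        hence "\<rho> (i + 2) = \<rho> i" using s2 ih by simp
        thus False using noback[of i] Suc.prems by simp
      qed
    qed
    have lin: "\<rho> i = \<rho> 0 + i" if "i \<le> d" for i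
      using that
    proof (induction i)
      case 0 thus ?case by simp
    next
      case (Suc i)
      have "\<rho> (i + 1) = \<rho> i + 1" using up[of i] Suc.prems by simp
      thus ?case using Suc by simp
    qed
    have "\<rho> d \<le> d" using bnd by simp
    hence r0: "\<rho> 0 = 0" using lin[of d] by simp
    have "\<rho> i = i" if "i \<le> d" for i using lin[OF that] r0 by simp
    thus ?thesis by simp
  next
    assume 2: "\<rho> 0 = \<rho> 1 + 1"
    have dn: "\<rho> i = \<rho> (i + 1) + 1" if "i < d" for i
      using that
    proof (induction i)
      case 0 thus ?case using 2 by simp
    next
      case (Suc i)
      have ih: "\<rho> i = \<rho> (i + 1) + 1" using Suc.IH Suc.prems by simp
      have s2: "\<rho> (Suc i + 1) = \<rho> (Suc i) + 1 \<or> \<rho> (Suc i) = \<rho> (Suc i + 1) + 1"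
        using st Suc.prems by blast
      show ?case
      proof (rule ccontr)
        assume "\<not> ?case"
        hence "\<rho> (i + 2) = \<rho> i" using s2 ih by simp
        thus False using noback[of i] Suc.prems by simp
      qed
    qed
    have lin: "\<rho> i + i = \<rho> 0" if "i \<le> d" for i
      using that
    proof (induction i)
      case 0 thus ?case by simp
    next
      case (Suc i)
      have "\<rho> i = \<rho> (i + 1) + 1" using dn[of i] Suc.prems by simp
      thus ?case using Suc by simp
    qed
    have "\<rho> 0 \<le> d" using bnd by simp
    hence "\<rho> 0 = d" using lin[of d] by simp
    hence "\<rho> i = d - i" if "i \<le> d" for i using lin[OF that] by simp
    thus ?thesis by simp
  qed
qed

lemma pathQ1:
  assumes "(\<forall>i\<le>d. \<tau> i = pi1 d i) \<or> (\<forall>i\<le>d. \<tau> i = pi1 d (d - i))"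
  shows "PATH d (\<lambda>i. i + 1 = d) \<tau>"
proof -
  obtain \<rho> where rho: "(\<forall>i. \<rho> i = i) \<or> (\<forall>i. \<rho> i = d - i)" and tau: "\<forall>i\<le>d. \<tau> i = pi1 d (\<rho> i)"
  proof (cases "\<forall>i\<le>d. \<tau> i = pi1 d i")
    case True then show ?thesis by (intro that[of "\<lambda>i. i"]) auto
  next
    case False then have "\<forall>i\<le>d. \<tau> i = pi1 d (d - i)" using assms by blast
    then show ?thesis by (intro that[of "\<lambda>i. d - i"]) auto
  qed
  have rb: "\<rho> i \<le> d" if "i \<le> d" for i using rho that by auto
  show ?thesis unfolding PATH_def
  proof (intro conjI allI impI)
    fix i j assume ij: "i \<le> d" "j \<le> d" "i + 1 < j \<or> j + 1 < i"
    show "\<not> Eg (\<lambda>i. i + 1 = d) (\<tau> i) (\<tau> j)"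
    proof
      assume "Eg (\<lambda>i. i + 1 = d) (\<tau> i) (\<tau> j)"
      moreover have ti: "\<tau> i = pi1 d (\<rho> i)" "\<tau> j = pi1 d (\<rho> j)" using tau ij by auto
      moreover have "\<tau> i \<le> d" "\<tau> j \<le> d" using ti pi1_le rb ij by auto
      ultimately have "p1inv d (\<tau> i) + 1 = p1inv d (\<tau> j) \<or> p1inv d (\<tau> j) + 1 = p1inv d (\<tau> i)"
        using Q1_adj by blast
      hence "\<rho> i + 1 = \<rho> j \<or> \<rho> j + 1 = \<rho> i" using ti p1inv_pi1 rb ij by simp
      thus False using rho ij by auto
    qed
  next
    fix i assume i: "i < d"
    have "Eg (\<lambda>i. i + 1 = d) (\<tau> i) (\<tau> (i + 1))"
    proof (cases "\<forall>i. \<rho> i = i")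
      case True thus ?thesis using tau i pi1_adj[OF i] by simp
    next
      case False
      hence r: "\<forall>i. \<rho> i = d - i" using rho by auto
      have "Eg (\<lambda>i. i + 1 = d) (pi1 d (d - (i + 1))) (pi1 d (d - (i + 1) + 1))"
        using pi1_adj[of "d - (i + 1)" d] i by simp
      moreover have "d - (i + 1) + 1 = d - i" using i by simp
      moreover have "\<tau> i = pi1 d (d - i)" "\<tau> (i + 1) = pi1 d (d - (i + 1))" using tau i r by auto
      ultimately show ?thesis using Eg_sym by metis
    qed
    thus "Eg (\<lambda>i. i + 1 = d) (\<tau> (i + 1)) (\<tau> i)" "Eg (\<lambda>i. i + 1 = d) (\<tau> i) (\<tau> (i + 1))"
      using Eg_sym by auto
  qed
qed

lemma Q1_unique:
  assumes inj: "inj_on \<sigma> {0..d}" and bnd: "\<forall>i\<le>d. \<sigma> i \<le> d"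
    and adj: "\<forall>i<d. Eg (\<lambda>i. i + 1 = d) (\<sigma> i) (\<sigma> (i + 1))"
  shows "(\<forall>i\<le>d. \<sigma> i = pi1 d i) \<or> (\<forall>i\<le>d. \<sigma> i = pi1 d (d - i))"
proof -
  define \<rho> where "\<rho> i = p1inv d (\<sigma> i)" for i
  have "\<forall>i<d. \<rho> (i + 1) = \<rho> i + 1 \<or> \<rho> i = \<rho> (i + 1) + 1"
  proof (intro allI impI)
    fix i assume i: "i < d"
    have "\<sigma> i \<le> d" "\<sigma> (i + 1) \<le> d" using bnd i by auto
    thus "\<rho> (i + 1) = \<rho> i + 1 \<or> \<rho> i = \<rho> (i + 1) + 1"
      using Q1_adj[of "\<sigma> i" d "\<sigma> (i + 1)"] adj i unfolding \<rho>_def by auto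
  qed
  moreover have "inj_on \<rho> {0..d}"
    unfolding inj_on_def
  proof (intro ballI impI)
    fix x y assume xy: "x \<in> {0..d}" "y \<in> {0..d}" "\<rho> x = \<rho> y"
    hence "pi1 d (p1inv d (\<sigma> x)) = pi1 d (p1inv d (\<sigma> y))" unfolding \<rho>_def by simp
    hence "\<sigma> x = \<sigma> y" using pi1_p1inv bnd xy by auto
    thus "x = y" using inj xy unfolding inj_on_def by blast
  qed
  moreover have "\<forall>i\<le>d. \<rho> i \<le> d" using bnd p1inv_le unfolding \<rho>_def by auto
  ultimately have "(\<forall>i\<le>d. \<rho> i = i) \<or> (\<forall>i\<le>d. \<rho> i = d - i)" by (rule path_mono)
  moreover have "\<sigma> i = pi1 d (\<rho> i)" if "i \<le> d" for i using pi1_p1inv bnd that unfolding \<rho>_def by auto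
  ultimately show ?thesis by auto
qed



lemma comb:
  fixes d :: nat and Dn :: "nat \<Rightarrow> bool" and \<sigma> :: "nat \<Rightarrow> nat"
  assumes d1: "d \<ge> 1" and bij: "bij_betw \<sigma> {0..d} {0..d}"
    and h3: "d = 3 \<Longrightarrow> Dn 1 \<Longrightarrow> Dn 0 \<or> Dn 2"
  shows "PATH d Dn \<sigma> \<longleftrightarrow>
    (Dn (d - 1) \<and> (\<forall>i. i + 2 \<le> d \<longrightarrow> \<not> Dn i) \<and>
       ((\<forall>i\<le>d. \<sigma> i = pi1 d i) \<or> (\<forall>i\<le>d. \<sigma> i = pi1 d (d - i)))) \<or>
    (Dn 0 \<and> (\<forall>i. 1 \<le> i \<and> i + 1 \<le> d \<longrightarrow> \<not> Dn i) \<and>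
       ((\<forall>i\<le>d. \<sigma> i = d - pi1 d i) \<or> (\<forall>i\<le>d. \<sigma> i = d - pi1 d (d - i))))"
    (is "_ \<longleftrightarrow> ?A \<or> ?B")
proof -
  define Q1 where "Q1 = (\<lambda>i::nat. i + 1 = d)"
  have sig: "\<sigma> i \<le> d" if "i \<le> d" for i using bij that by (auto simp: bij_betw_def)
  have inj: "inj_on \<sigma> {0..d}" using bij by (auto simp: bij_betw_def)
  have surj: "\<exists>q\<le>d. \<sigma> q = m" if "m \<le> d" for m
  proof -
    have "m \<in> \<sigma> ` {0..d}" using bij that by (auto simp: bij_betw_def)
    thus ?thesis by auto
  qed
  have injB: "inj_on (\<lambda>i. d - \<sigma> i) {0..d}"
  proof (rule inj_onI)
    fix x y assume xy: "x \<in> {0..d}" "y \<in> {0..d}" "d - \<sigma> x = d - \<sigma> y"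
    hence "\<sigma> x = \<sigma> y" using sig[of x] sig[of y] by auto
    thus "x = y" using inj xy unfolding inj_on_def by blast
  qed
  have eqA: "Eg Dn m k \<longleftrightarrow> Eg Q1 m k"
    if DnQ: "\<And>m. m < d \<Longrightarrow> Dn m \<longleftrightarrow> m + 1 = d" and mk: "m \<le> d" "k \<le> d" for m k
  proof -
    have h1: "(m + 1 = k \<and> Dn m) \<longleftrightarrow> (m + 1 = k \<and> Q1 m)" using DnQ[of m] mk unfolding Q1_def by auto
    have h2: "(k + 1 = m \<and> Dn k) \<longleftrightarrow> (k + 1 = m \<and> Q1 k)" using DnQ[of k] mk unfolding Q1_def by auto
    show ?thesis unfolding Eg_def using h1 h2 by blast
  qed
  have eqB: "Eg Dn m k \<longleftrightarrow> Eg Q1 (d - m) (d - k)"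
    if DnQ: "\<And>m. m < d \<Longrightarrow> Dn m \<longleftrightarrow> m = 0" and mk: "m \<le> d" "k \<le> d" for m k
  proof -
    have h0: "(m + 2 = k) \<longleftrightarrow> (d - k + 2 = d - m)" "(k + 2 = m) \<longleftrightarrow> (d - m + 2 = d - k)" using mk by auto
    have h1: "(m + 1 = k \<and> Dn m) \<longleftrightarrow> (d - k + 1 = d - m \<and> Q1 (d - k))" using DnQ[of m] mk unfolding Q1_def by auto
    have h2: "(k + 1 = m \<and> Dn k) \<longleftrightarrow> (d - m + 1 = d - k \<and> Q1 (d - m))" using DnQ[of k] mk unfolding Q1_def by auto
    show ?thesis unfolding Eg_def using h0 h1 h2 by blast
  qed
  show ?thesis
  proof
    assume "?A \<or> ?B"
    then show "PATH d Dn \<sigma>"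
    proof
      assume A: ?A
      have DnQ: "Dn m \<longleftrightarrow> m + 1 = d" if "m < d" for m
      proof (cases "m + 1 = d")
        case True hence "m = d - 1" by simp
        thus ?thesis using A True by simp
      next
        case False hence "m + 2 \<le> d" using that by simp
        thus ?thesis using A False by simp
      qed
      have "PATH d Q1 \<sigma>" using pathQ1 A unfolding Q1_def by blast
      moreover have "PATH d Dn \<sigma> \<longleftrightarrow> PATH d Q1 (\<lambda>i. \<sigma> i)"
        by (rule PATH_cong[where f = "\<lambda>x. x"]) (use eqA DnQ sig in auto)
      ultimately show ?thesis by simp
    next
      assume B: ?B
      have DnQ: "Dn m \<longleftrightarrow> m = 0" if "m < d" for m
      proof (cases "m = 0")
        case True thus ?thesis using B by simp
      next
        case False hence "1 \<le> m" "m + 1 \<le> d" using that by auto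
        thus ?thesis using B False by simp
      qed
      have tau: "(\<forall>i\<le>d. d - \<sigma> i = pi1 d i) \<or> (\<forall>i\<le>d. d - \<sigma> i = pi1 d (d - i))"
      proof -
        have "(\<forall>i\<le>d. \<sigma> i = d - pi1 d i) \<or> (\<forall>i\<le>d. \<sigma> i = d - pi1 d (d - i))" using B by blast
        moreover have "pi1 d i \<le> d" "pi1 d (d - i) \<le> d" if "i \<le> d" for i using pi1_le that by auto
        ultimately show ?thesis by (metis diff_diff_cancel)
      qed
      have "PATH d Q1 (\<lambda>i. d - \<sigma> i)" using pathQ1[OF tau] unfolding Q1_def by blast
      moreover have "PATH d Dn \<sigma> \<longleftrightarrow> PATH d Q1 (\<lambda>i. d - \<sigma> i)"
        by (rule PATH_cong[where f = "\<lambda>x. d - x"]) (use eqB DnQ sig in auto)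
      ultimately show ?thesis by simp
    qed
  next
    assume P: "PATH d Dn \<sigma>"
    have nonadj: "\<not> Eg Dn (\<sigma> i) (\<sigma> j)" if "i \<le> d" "j \<le> d" "i + 1 < j \<or> j + 1 < i" for i j
      using P that unfolding PATH_def by blast
    have adj: "Eg Dn (\<sigma> i) (\<sigma> (i + 1))" if "i < d" for i
      using P that unfolding PATH_def by blast
    have nb: "x = \<sigma> (p + 1) \<or> x = \<sigma> (p - 1)" if H: "p \<le> d" "x \<le> d" "Eg Dn (\<sigma> p) x" for p x
    proof -
      obtain q where q: "q \<le> d" "\<sigma> q = x" using surj[OF H(2)] by blast
      have "\<not> (p + 1 < q \<or> q + 1 < p)" using nonadj[OF H(1) q(1)] q H(3) by blast
      moreover have "q \<noteq> p" using q H(3) Eg_irr by blast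
      ultimately have "q = p + 1 \<or> q = p - 1" by arith
      thus ?thesis using q by blast
    qed
    have deg3: False if H: "v \<le> d" "x \<le> d" "y \<le> d" "z \<le> d" "x \<noteq> y" "x \<noteq> z" "y \<noteq> z"
      "Eg Dn v x" "Eg Dn v y" "Eg Dn v z" for v x y z
    proof -
      obtain p where p: "p \<le> d" "\<sigma> p = v" using surj[OF H(1)] by blast
      have "x = \<sigma> (p + 1) \<or> x = \<sigma> (p - 1)" "y = \<sigma> (p + 1) \<or> y = \<sigma> (p - 1)"
        "z = \<sigma> (p + 1) \<or> z = \<sigma> (p - 1)"
        using nb[OF p(1) H(2)] nb[OF p(1) H(3)] nb[OF p(1) H(4)] H p by auto
      thus False using H(5,6,7) by auto
    qed
    have mid: "\<not> Dn i" if H: "1 \<le> i" "i + 2 \<le> d" for i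
    proof
      assume Di: "Dn i"
      consider "i \<ge> 2" | "i = 1" "d \<ge> 4" | "i = 1" "d = 3" using H by linarith
      then show False
      proof cases
        case 1
        show False by (rule deg3[of i "i - 2" "i + 1" "i + 2"]) (use 1 H Di in \<open>auto simp: Eg_def\<close>)
      next
        case 2
        show False by (rule deg3[of 2 0 1 4]) (use 2 H Di in \<open>auto simp: Eg_def\<close>)
      next
        case 3
        hence "Dn 0 \<or> Dn 2" using h3 Di by blast
        thus False
        proof
          assume "Dn 0"
          show False by (rule deg3[of 1 0 2 3]) (use 3 Di \<open>Dn 0\<close> in \<open>auto simp: Eg_def\<close>)
        next
          assume "Dn 2"
          show False by (rule deg3[of 2 0 1 3]) (use 3 Di \<open>Dn 2\<close> in \<open>auto simp: Eg_def\<close>)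
        qed
      qed
    qed
    have adjQ: "\<forall>i<d. Eg Q1 (\<sigma> i) (\<sigma> (i + 1))" if "PATH d Q1 \<sigma>" for \<sigma>
      using that unfolding PATH_def by blast
    consider "Dn (d - 1)" "\<not> Dn 0 \<or> d = 1" | "Dn 0" "\<not> Dn (d - 1)" | "\<not> Dn 0" "\<not> Dn (d - 1)"
      | "Dn 0" "Dn (d - 1)" "d \<ge> 2" using d1 by force
    then show "?A \<or> ?B"
    proof cases
      case 1
      have nD: "\<forall>i. i + 2 \<le> d \<longrightarrow> \<not> Dn i"
      proof (intro allI impI)
        fix i assume "i + 2 \<le> d" thus "\<not> Dn i" using mid[of i] 1 by (cases "i = 0") auto
      qed
      have DnQ: "Dn m \<longleftrightarrow> m + 1 = d" if "m < d" for m
      proof (cases "m + 1 = d")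
        case True hence "m = d - 1" by simp
        thus ?thesis using 1 True by simp
      next
        case False hence "m + 2 \<le> d" using that by simp
        thus ?thesis using nD False by simp
      qed
      have "PATH d Dn \<sigma> \<longleftrightarrow> PATH d Q1 (\<lambda>i. \<sigma> i)"
        by (rule PATH_cong[where f = "\<lambda>x. x"]) (use eqA DnQ sig in auto)
      hence "PATH d Q1 \<sigma>" using P by simp
      hence "(\<forall>i\<le>d. \<sigma> i = pi1 d i) \<or> (\<forall>i\<le>d. \<sigma> i = pi1 d (d - i))"
        using Q1_unique[OF inj _ adjQ[unfolded Q1_def]] sig unfolding Q1_def by blast
      thus ?thesis using 1 nD by blast
    next
      case 2
      have nD: "\<forall>i. 1 \<le> i \<and> i + 1 \<le> d \<longrightarrow> \<not> Dn i"
      proof (intro allI impI)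
        fix i assume a: "1 \<le> i \<and> i + 1 \<le> d"
        show "\<not> Dn i"
        proof (cases "i + 2 \<le> d")
          case True thus ?thesis using mid[of i] a by simp
        next
          case False hence "i = d - 1" using a by arith
          thus ?thesis using 2 by simp
        qed
      qed
      have DnQ: "Dn m \<longleftrightarrow> m = 0" if "m < d" for m
      proof (cases "m = 0")
        case True thus ?thesis using 2 by simp
      next
        case False hence "1 \<le> m" "m + 1 \<le> d" using that by auto
        thus ?thesis using nD False by simp
      qed
      have "PATH d Dn \<sigma> \<longleftrightarrow> PATH d Q1 (\<lambda>i. d - \<sigma> i)"
        by (rule PATH_cong[where f = "\<lambda>x. d - x"]) (use eqB DnQ sig in auto)
      hence "PATH d Q1 (\<lambda>i. d - \<sigma> i)" using P by simp
      hence "(\<forall>i\<le>d. d - \<sigma> i = pi1 d i) \<or> (\<forall>i\<le>d. d - \<sigma> i = pi1 d (d - i))"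
        using Q1_unique[OF injB _ adjQ[unfolded Q1_def]] unfolding Q1_def by simp
      hence "(\<forall>i\<le>d. \<sigma> i = d - pi1 d i) \<or> (\<forall>i\<le>d. \<sigma> i = d - pi1 d (d - i))"
      proof -
        have "d - (d - \<sigma> i) = \<sigma> i" if "i \<le> d" for i using sig[OF that] by simp
        thus ?thesis using \<open>(\<forall>i\<le>d. d - \<sigma> i = pi1 d i) \<or> (\<forall>i\<le>d. d - \<sigma> i = pi1 d (d - i))\<close> by metis
      qed
      thus ?thesis using 2 nD by blast
    next
      case 3
      have nD: "\<not> Dn i" if "i < d" for i
        using mid[of i] 3 that by (cases "i = 0"; cases "i = d - 1") auto
      have par: "\<sigma> (i + 1) mod 2 = \<sigma> i mod 2" if "i < d" for i
      proof -
        have "Eg Dn (\<sigma> i) (\<sigma> (i + 1))" using adj that .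
        moreover have "\<sigma> i \<le> d" "\<sigma> (i + 1) \<le> d" using sig that by auto
        ultimately have "\<sigma> i + 2 = \<sigma> (i + 1) \<or> \<sigma> (i + 1) + 2 = \<sigma> i"
          unfolding Eg_def using nD by force
        thus ?thesis by (metis add_2_eq_Suc' mod_add_self2)
      qed
      have allp: "\<sigma> i mod 2 = \<sigma> 0 mod 2" if "i \<le> d" for i
        using that
      proof (induction i)
        case 0 thus ?case by simp
      next
        case (Suc i) thus ?case using par[of i] by simp
      qed
      obtain q0 where "q0 \<le> d" "\<sigma> q0 = 0" using surj[of 0] by auto
      moreover obtain q1 where "q1 \<le> d" "\<sigma> q1 = 1" using surj[of 1] d1 by auto
      ultimately show ?thesis using allp[of q0] allp[of q1] by simp
    next
      case 4
      note c4 = 4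
      have nb0: "x = \<sigma> 1" if "x \<le> d" "Eg Dn (\<sigma> 0) x" for x
        using nb[of 0 x] that Eg_irr by auto
      have two: "\<exists>x y. x \<le> d \<and> y \<le> d \<and> x \<noteq> y \<and> Eg Dn v x \<and> Eg Dn v y" if H: "v \<le> d" for v
      proof -
        consider "v = 0" | "v = 1" "d = 2" | "v = 1" "d \<ge> 3" | "v \<ge> 2" "v + 2 \<le> d"
          | "v \<ge> 2" "v = d" | "v \<ge> 2" "v + 1 = d" using H c4 by linarith
        then show ?thesis
        proof cases
          case 1 thus ?thesis using c4 by (intro exI[of _ 1] exI[of _ 2]) (auto simp: Eg_def)
        next
          case 2 thus ?thesis using c4 by (intro exI[of _ 0] exI[of _ 2]) (auto simp: Eg_def)
        next
          case 3 thus ?thesis using c4 by (intro exI[of _ 0] exI[of _ 3]) (auto simp: Eg_def)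
        next
          case 4 thus ?thesis using c4 by (intro exI[of _ "v - 2"] exI[of _ "v + 2"]) (auto simp: Eg_def)
        next
          case 5
          obtain e where e: "d = e + 2" using c4 by (metis le_add_diff_inverse2)
          have "Dn (e + 1)" using c4 e by simp
          thus ?thesis using 5 e by (intro exI[of _ e] exI[of _ "e + 1"]) (auto simp: Eg_def)
        next
          case 6 thus ?thesis using c4 by (intro exI[of _ "v - 2"] exI[of _ "v + 1"]) (auto simp: Eg_def)
        qed
      qed
      obtain x y where "x \<le> d" "y \<le> d" "x \<noteq> y" "Eg Dn (\<sigma> 0) x" "Eg Dn (\<sigma> 0) y"
        using two[OF sig[of 0]] by auto
      thus ?thesis using nb0 by blast
    qed
  qed
qed



lemma negfrac:
  fixes A a B b X Y Z W :: real
  assumes "A = - a" "B = - b"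
  shows "- (A * X / Y) - B * Z / W = a * X / Y + b * Z / W"
  using assms by simp

lemma d3_vals:
  assumes "r > -1" "s > -1"
  shows "astar 3 r s 0 = 3 * (3 + s) / (6 + r + s)"
    "astar 3 r s 1 = 2 * (2 + s) * (6 + r + s) / ((4 + r + s) * (5 + r + s)) + (3 + r) * (3 + r + s) / ((5 + r + s) * (6 + r + s))"
    "astar 3 r s 2 = (1 + s) * (5 + r + s) / ((2 + r + s) * (3 + r + s)) + 2 * (2 + r) * (2 + r + s) / ((3 + r + s) * (4 + r + s))"
    "astar 3 r s 3 = 3 * (1 + r) / (2 + r + s)"
proof -
  have p: "2 + r + s > 0" using assms by linarith
  have q: "2 + (r + s) \<noteq> 0" "3 + (r + s) \<noteq> 0" "4 + (r + s) \<noteq> 0" "5 + (r + s) \<noteq> 0" "6 + (r + s) \<noteq> 0"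
     "r + (s + 2) \<noteq> 0" "r + (s + 3) \<noteq> 0" "r + (s + 4) \<noteq> 0" "r + (s + 5) \<noteq> 0" "r + (s + 6) \<noteq> 0"
    using p by linarith+
  show "astar 3 r s 0 = 3 * (3 + s) / (6 + r + s)"
    using p by (simp add: astar_def bstar_def cstar_def thstar_def numeral_eq_Suc pochhammer_Suc field_simps)
  show "astar 3 r s 1 = 2 * (2 + s) * (6 + r + s) / ((4 + r + s) * (5 + r + s)) + (3 + r) * (3 + r + s) / ((5 + r + s) * (6 + r + s))"
    using q apply (simp add: astar_def bstar_def cstar_def thstar_def numeral_eq_Suc pochhammer_Suc)
    apply (simp only: add.assoc)
    by (rule negfrac) simp_all
  show "astar 3 r s 2 = (1 + s) * (5 + r + s) / ((2 + r + s) * (3 + r + s)) + 2 * (2 + r) * (2 + r + s) / ((3 + r + s) * (4 + r + s))"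
    using q apply (simp add: astar_def bstar_def cstar_def thstar_def numeral_eq_Suc pochhammer_Suc)
    apply (simp only: add.assoc)
    by (rule negfrac) simp_all
  show "astar 3 r s 3 = 3 * (1 + r) / (2 + r + s)"
    using p by (simp add: astar_def bstar_def cstar_def thstar_def numeral_eq_Suc pochhammer_Suc field_simps)
qed

lemma d3_poly:
  fixes r s u2 u3 u4 u5 u6 :: real
  assumes u: "u2 = 2 + r + s" "u3 = 3 + r + s" "u4 = 4 + r + s" "u5 = 5 + r + s" "u6 = 6 + r + s"
    and nz: "u2 \<noteq> 0" "u3 \<noteq> 0" "u4 \<noteq> 0" "u5 \<noteq> 0" "u6 \<noteq> 0"
  shows "(3 * (3 + s) / u6 + (2 * (2 + s) * u6 / (u4 * u5) + (3 + r) * u3 / (u5 * u6))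
     - ((1 + s) * u5 / (u2 * u3) + 2 * (2 + r) * u2 / (u3 * u4)) - 3 * (1 + r) / u2) * (u2 * u3 * u4 * u5 * u6)
   = (s - r) * (48*(s+1) + 76*(s+1)^2 + 32*(s+1)^3 + 4*(s+1)^4 + 48*(r+1) + 152*(r+1)*(s+1) + 96*(r+1)*(s+1)^2
      + 16*(r+1)*(s+1)^3 + 76*(r+1)^2 + 96*(r+1)^2*(s+1) + 24*(r+1)^2*(s+1)^2 + 32*(r+1)^3 + 16*(r+1)^3*(s+1) + 4*(r+1)^4)"
proof -
  have "(3 * (3 + s) / u6 + (2 * (2 + s) * u6 / (u4 * u5) + (3 + r) * u3 / (u5 * u6))
     - ((1 + s) * u5 / (u2 * u3) + 2 * (2 + r) * u2 / (u3 * u4)) - 3 * (1 + r) / u2) * (u2 * u3 * u4 * u5 * u6)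
    = 3 * (3 + s) * u2 * u3 * u4 * u5 + 2 * (2 + s) * u6 * u2 * u3 * u6 + (3 + r) * u3 * u2 * u3 * u4
      - (1 + s) * u5 * u4 * u5 * u6 - 2 * (2 + r) * u2 * u2 * u5 * u6 - 3 * (1 + r) * u3 * u4 * u5 * u6"
    using nz by (simp add: field_simps)
  also have "\<dots> = (s - r) * (48*(s+1) + 76*(s+1)^2 + 32*(s+1)^3 + 4*(s+1)^4 + 48*(r+1) + 152*(r+1)*(s+1) + 96*(r+1)*(s+1)^2
      + 16*(r+1)*(s+1)^3 + 76*(r+1)^2 + 96*(r+1)^2*(s+1) + 24*(r+1)^2*(s+1)^2 + 32*(r+1)^3 + 16*(r+1)^3*(s+1) + 4*(r+1)^4)"
    unfolding u by (simp add: algebra_simps power2_eq_square power3_eq_cube power4_eq_xxxx)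
  finally show ?thesis .
qed

lemma Qpos:
  fixes x y :: real assumes "x > 0" "y > 0"
  shows "0 < 48*y + 76*y^2 + 32*y^3 + 4*y^4 + 48*x + 152*x*y + 96*x*y^2
      + 16*x*y^3 + 76*x^2 + 96*x^2*y + 24*x^2*y^2 + 32*x^3 + 16*x^3*y + 4*x^4"
  by (intro add_pos_pos mult_pos_pos zero_less_power) (simp_all add: assms)

lemma d3_eq:
  fixes r u2 u3 u4 u5 u6 :: real
  assumes u: "u2 = 2 + r + r" "u3 = 3 + r + r" "u4 = 4 + r + r" "u5 = 5 + r + r" "u6 = 6 + r + r"
    and nz: "u2 \<noteq> 0" "u3 \<noteq> 0" "u4 \<noteq> 0" "u5 \<noteq> 0" "u6 \<noteq> 0"
  shows "3 * (3 + r) / u6 = (1 + r) * u5 / (u2 * u3) + 2 * (2 + r) * u2 / (u3 * u4)"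
  using nz by (simp add: field_simps) (simp add: u algebra_simps)

lemma d3_key:
  assumes r: "r > -1" and s: "s > -1"
    and e: "astar 3 r s 0 + astar 3 r s 1 = astar 3 r s 2 + astar 3 r s 3"
  shows "astar 3 r s 0 = astar 3 r s 2"
proof -
  have p: "2 + r + s > 0" "3 + r + s > 0" "4 + r + s > 0" "5 + r + s > 0" "6 + r + s > 0" using r s by linarith+
  define Q where "Q = (48*(s+1) + 76*(s+1)^2 + 32*(s+1)^3 + 4*(s+1)^4 + 48*(r+1) + 152*(r+1)*(s+1) + 96*(r+1)*(s+1)^2
      + 16*(r+1)*(s+1)^3 + 76*(r+1)^2 + 96*(r+1)^2*(s+1) + 24*(r+1)^2*(s+1)^2 + 32*(r+1)^3 + 16*(r+1)^3*(s+1) + 4*(r+1)^4)"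
  have x: "r + 1 > 0" and y: "s + 1 > 0" using r s by auto
  have Qp: "Q > 0" unfolding Q_def using Qpos[OF x y] .
  have "(astar 3 r s 0 + astar 3 r s 1 - astar 3 r s 2 - astar 3 r s 3) * ((2 + r + s) * (3 + r + s) * (4 + r + s) * (5 + r + s) * (6 + r + s)) = (s - r) * Q"
    unfolding d3_vals[OF r s] Q_def
    by (rule d3_poly[OF refl refl refl refl refl]) (use p in auto)
  hence "(s - r) * Q = 0" using e by simp
  hence sr: "s = r" using Qp by simp
  have p': "2 + r + r > 0" "3 + r + r > 0" "4 + r + r > 0" "5 + r + r > 0" "6 + r + r > 0" using p unfolding sr .
  show ?thesis unfolding d3_vals[OF r s] unfolding sr
    by (rule d3_eq[OF refl refl refl refl refl]) (use p' in auto)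
qed


lemma pi1_rev: "i \<le> d \<Longrightarrow> pi1 d (d - i) = (if i < (d + 1) div 2 then 2 * i + 1 else 2 * (d - i))"
  unfolding pi1_def by (rule dm2[of d]) auto

lemma split_all:
  fixes X f g h :: "nat \<Rightarrow> 'a"
  assumes "\<And>i. i \<le> d \<Longrightarrow> f i = (if P i then g i else h i)" "\<And>i. P i \<Longrightarrow> i \<le> d"
    "\<And>i. i \<le> d \<Longrightarrow> \<not> P i \<longleftrightarrow> Q i"
  shows "((\<forall>i. P i \<longrightarrow> X i = g i) \<and> (\<forall>i. Q i \<and> i \<le> d \<longrightarrow> X i = h i)) \<longleftrightarrow> (\<forall>i\<le>d. X i = f i)"
proof
  assume a: "(\<forall>i. P i \<longrightarrow> X i = g i) \<and> (\<forall>i. Q i \<and> i \<le> d \<longrightarrow> X i = h i)"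
  show "\<forall>i\<le>d. X i = f i"
  proof (intro allI impI)
    fix i assume i: "i \<le> d"
    show "X i = f i" using a assms(1)[OF i] assms(3)[OF i] i by (cases "P i") auto
  qed
next
  assume a: "\<forall>i\<le>d. X i = f i"
  show "(\<forall>i. P i \<longrightarrow> X i = g i) \<and> (\<forall>i. Q i \<and> i \<le> d \<longrightarrow> X i = h i)"
  proof (intro conjI allI impI)
    fix i assume "P i" thus "X i = g i" using a assms(1)[of i] assms(2)[of i] by auto
  next
    fix i assume "Q i \<and> i \<le> d" thus "X i = h i" using a assms(1)[of i] assms(3)[of i] by auto
  qed
qed

lemma ustar_comp:
  assumes r: "r > -1" and s: "s > -1" and ub: "\<forall>i\<le>d. ub i = ustar d r s (\<sigma> i)"
    and sig: "\<forall>i\<le>d. \<sigma> i \<le> d" and f: "\<forall>i\<le>d. f i \<le> d"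
  shows "(\<forall>i\<le>d. ub i = ustar d r s (f i)) \<longleftrightarrow> (\<forall>i\<le>d. \<sigma> i = f i)"
  using ub sig f ustar_inj[OF r s] by metis

theorem proposition2p5:
  fixes d :: nat and r s lam :: real and ub :: "nat \<Rightarrow> real poly"
  assumes "r > -1" and "s > -1" and "d \<ge> 1"
    and "\<exists>\<sigma>. bij_betw \<sigma> {0..d} {0..d} \<and> (\<forall>i\<le>d. ub i = ustar d r s (\<sigma> i))"
  shows "irred_tridiag d (rep_matrix d (Lsq d r s lam) ub) \<longleftrightarrow>
    ((2 * lam + astar d r s (d - 1) + astar d r s d \<noteq> 0
      \<and> (\<forall>i. i + 2 \<le> d \<longrightarrow> 2 * lam + astar d r s i + astar d r s (i + 1) = 0)
      \<and> (((\<forall>i. i \<le> d div 2 \<longrightarrow> ub i = ustar d r s (2 * i))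
           \<and> (\<forall>i. d div 2 + 1 \<le> i \<and> i \<le> d \<longrightarrow> ub i = ustar d r s (2 * (d - i) + 1)))
         \<or> ((\<forall>i. i < (d + 1) div 2 \<longrightarrow> ub i = ustar d r s (2 * i + 1))
           \<and> (\<forall>i. (d + 1) div 2 \<le> i \<and> i \<le> d \<longrightarrow> ub i = ustar d r s (2 * (d - i))))))
    \<or> (2 * lam + astar d r s 0 + astar d r s 1 \<noteq> 0
      \<and> (\<forall>i. 1 \<le> i \<and> i + 1 \<le> d \<longrightarrow> 2 * lam + astar d r s i + astar d r s (i + 1) = 0)
      \<and> (((\<forall>i. i \<le> d div 2 \<longrightarrow> ub i = ustar d r s (d - 2 * i))
           \<and> (\<forall>i. d div 2 + 1 \<le> i \<and> i \<le> d \<longrightarrow> ub i = ustar d r s (2 * i - d - 1)))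
         \<or> ((\<forall>i. i < (d + 1) div 2 \<longrightarrow> ub i = ustar d r s (d - 2 * i - 1))
           \<and> (\<forall>i. (d + 1) div 2 \<le> i \<and> i \<le> d \<longrightarrow> ub i = ustar d r s (2 * i - d))))))"
proof -
  note r = assms(1) and s = assms(2) and d1 = assms(3)
  from assms(4) obtain \<sigma> where bij: "bij_betw \<sigma> {0..d} {0..d}"
    and ub: "\<forall>i\<le>d. ub i = ustar d r s (\<sigma> i)" by blast
  have sig: "\<forall>i\<le>d. \<sigma> i \<le> d" using bij by (auto simp: bij_betw_def)
  define Dn where "Dn = (\<lambda>i. 2 * lam + astar d r s i + astar d r s (i + 1) \<noteq> 0)"
  have irr: "irred_tridiag d (rep_matrix d (Lsq d r s lam) ub) \<longleftrightarrow> PATH d Dn \<sigma>"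
    unfolding PATH_def Dn_def using irred_iff[OF r s bij ub, of lam] by simp
  have h3: "Dn 0 \<or> Dn 2" if d3: "d = 3" and D1: "Dn 1"
  proof (rule ccontr)
    assume "\<not> (Dn 0 \<or> Dn 2)"
    hence e0: "2 * lam + astar 3 r s 0 + astar 3 r s 1 = 0" and e2: "2 * lam + astar 3 r s 2 + astar 3 r s 3 = 0"
      unfolding Dn_def d3 by auto
    hence "astar 3 r s 0 + astar 3 r s 1 = astar 3 r s 2 + astar 3 r s 3" by linarith
    hence "astar 3 r s 0 = astar 3 r s 2" by (rule d3_key[OF r s])
    hence "2 * lam + astar 3 r s 1 + astar 3 r s 2 = 0" using e0 by linarith
    thus False using D1 unfolding Dn_def d3 one_add_one by simp
  qed
  note cmb = comb[OF d1 bij h3]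
  have pl: "\<forall>i\<le>d. pi1 d i \<le> d" "\<forall>i\<le>d. pi1 d (d - i) \<le> d" "\<forall>i\<le>d. d - pi1 d i \<le> d"
    "\<forall>i\<le>d. d - pi1 d (d - i) \<le> d" using pi1_le by auto
  have o1: "((\<forall>i. i \<le> d div 2 \<longrightarrow> ub i = ustar d r s (2 * i))
           \<and> (\<forall>i. d div 2 + 1 \<le> i \<and> i \<le> d \<longrightarrow> ub i = ustar d r s (2 * (d - i) + 1)))
     \<longleftrightarrow> (\<forall>i\<le>d. \<sigma> i = pi1 d i)"
  proof -
    have "((\<forall>i. i \<le> d div 2 \<longrightarrow> ub i = ustar d r s (2 * i))
           \<and> (\<forall>i. d div 2 + 1 \<le> i \<and> i \<le> d \<longrightarrow> ub i = ustar d r s (2 * (d - i) + 1)))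
       \<longleftrightarrow> (\<forall>i\<le>d. ub i = ustar d r s (pi1 d i))"
      by (rule split_all) (auto simp: pi1_def)
    also have "\<dots> \<longleftrightarrow> (\<forall>i\<le>d. \<sigma> i = pi1 d i)" by (rule ustar_comp[OF r s ub sig pl(1)])
    finally show ?thesis .
  qed
  have o2: "((\<forall>i. i < (d + 1) div 2 \<longrightarrow> ub i = ustar d r s (2 * i + 1))
           \<and> (\<forall>i. (d + 1) div 2 \<le> i \<and> i \<le> d \<longrightarrow> ub i = ustar d r s (2 * (d - i))))
     \<longleftrightarrow> (\<forall>i\<le>d. \<sigma> i = pi1 d (d - i))"
  proof -
    have "((\<forall>i. i < (d + 1) div 2 \<longrightarrow> ub i = ustar d r s (2 * i + 1))
           \<and> (\<forall>i. (d + 1) div 2 \<le> i \<and> i \<le> d \<longrightarrow> ub i = ustar d r s (2 * (d - i))))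
       \<longleftrightarrow> (\<forall>i\<le>d. ub i = ustar d r s (pi1 d (d - i)))"
    proof (rule split_all)
      show "i \<le> d" if "i < (d + 1) div 2" for i using that by linarith
    qed (auto simp: pi1_rev)
    also have "\<dots> \<longleftrightarrow> (\<forall>i\<le>d. \<sigma> i = pi1 d (d - i))" by (rule ustar_comp[OF r s ub sig pl(2)])
    finally show ?thesis .
  qed
  have o3: "((\<forall>i. i \<le> d div 2 \<longrightarrow> ub i = ustar d r s (d - 2 * i))
           \<and> (\<forall>i. d div 2 + 1 \<le> i \<and> i \<le> d \<longrightarrow> ub i = ustar d r s (2 * i - d - 1)))
     \<longleftrightarrow> (\<forall>i\<le>d. \<sigma> i = d - pi1 d i)"
  proof -
    have e: "d - pi1 d i = (if i \<le> d div 2 then d - 2 * i else 2 * i - d - 1)" if "i \<le> d" for i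
      apply (rule dm2[of d]) using that unfolding pi1_def by auto
    have "((\<forall>i. i \<le> d div 2 \<longrightarrow> ub i = ustar d r s (d - 2 * i))
           \<and> (\<forall>i. d div 2 + 1 \<le> i \<and> i \<le> d \<longrightarrow> ub i = ustar d r s (2 * i - d - 1)))
       \<longleftrightarrow> (\<forall>i\<le>d. ub i = ustar d r s (d - pi1 d i))"
      by (rule split_all) (auto simp: e)
    also have "\<dots> \<longleftrightarrow> (\<forall>i\<le>d. \<sigma> i = d - pi1 d i)" by (rule ustar_comp[OF r s ub sig pl(3)])
    finally show ?thesis .
  qed
  have o4: "((\<forall>i. i < (d + 1) div 2 \<longrightarrow> ub i = ustar d r s (d - 2 * i - 1))
           \<and> (\<forall>i. (d + 1) div 2 \<le> i \<and> i \<le> d \<longrightarrow> ub i = ustar d r s (2 * i - d)))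
     \<longleftrightarrow> (\<forall>i\<le>d. \<sigma> i = d - pi1 d (d - i))"
  proof -
    have e: "d - pi1 d (d - i) = (if i < (d + 1) div 2 then d - 2 * i - 1 else 2 * i - d)" if "i \<le> d" for i
      using that by (simp add: pi1_rev; arith)
    have "((\<forall>i. i < (d + 1) div 2 \<longrightarrow> ub i = ustar d r s (d - 2 * i - 1))
           \<and> (\<forall>i. (d + 1) div 2 \<le> i \<and> i \<le> d \<longrightarrow> ub i = ustar d r s (2 * i - d)))
       \<longleftrightarrow> (\<forall>i\<le>d. ub i = ustar d r s (d - pi1 d (d - i)))"
    proof (rule split_all)
      show "i \<le> d" if "i < (d + 1) div 2" for i using that by linarith
    qed (auto simp: e)
    also have "\<dots> \<longleftrightarrow> (\<forall>i\<le>d. \<sigma> i = d - pi1 d (d - i))" by (rule ustar_comp[OF r s ub sig pl(4)])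
    finally show ?thesis .
  qed
  have dd: "d - 1 + 1 = d" using d1 by simp
  show ?thesis
  proof -
    have "irred_tridiag d (rep_matrix d (Lsq d r s lam) ub) \<longleftrightarrow>
      (Dn (d - 1) \<and> (\<forall>i. i + 2 \<le> d \<longrightarrow> \<not> Dn i) \<and>
       ((\<forall>i\<le>d. \<sigma> i = pi1 d i) \<or> (\<forall>i\<le>d. \<sigma> i = pi1 d (d - i)))) \<or>
      (Dn 0 \<and> (\<forall>i. 1 \<le> i \<and> i + 1 \<le> d \<longrightarrow> \<not> Dn i) \<and>
       ((\<forall>i\<le>d. \<sigma> i = d - pi1 d i) \<or> (\<forall>i\<le>d. \<sigma> i = d - pi1 d (d - i))))"
      using irr cmb by blast
    then show ?thesis unfolding o1 o2 o3 o4 unfolding Dn_def dd by simp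
  qed
qed

end
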